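(* For all integers $x\ge0$ and $r\ge1$ there is a finite undirected graph $H$ with two specified vertices $s,t$ such that the smallest $s$-$t$ separator of $H$ has size $r$ and the union of all important $s$-$t$ separators of excess at most $x$ has size $2^{x+1}r-r$.
   Context: For disjoint $X,Y\subseteq V(H)$, a set $K\subseteq V(H)\setminus(X\cup Y)$ is an $X$-$Y$ separator if $H\setminus K$ has no path from $X$ to $Y$; an $s$-$t$ separator is a $\{s\}$-$\{t\}$ separator. $NR(H,A,B)$ is the set of vertices not reachable from $A$ in $H\setminus B$. For separators, $K_1\prec^*K_2$ means $NR(H,Y,K_1)\subset NR(H,Y,K_2)$ (proper inclusion). A minimal $X$-$Y$ separator $K$ is important if there is no $X$-$Y$ separator $K'$ with $K\prec^*K'$ and $|K|\ge|K'|$. The excess of an important separator $S$ is $|S|-r_0$, where $r_0$ is the size of a smallest important separator. *)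

theory Defs
  imports Main
begin

definition ugraph :: "'a set \<Rightarrow> ('a \<times> 'a) set \<Rightarrow> bool" where
  "ugraph V E \<longleftrightarrow> finite V \<and> E \<subseteq> V \<times> V \<and> sym E \<and> irrefl E"

definition reach_avoid :: "'a set \<Rightarrow> ('a \<times> 'a) set \<Rightarrow> 'a set \<Rightarrow> 'a \<Rightarrow> 'a \<Rightarrow> bool" where
  "reach_avoid V E B a b \<longleftrightarrow> a \<in> V - B \<and> (a, b) \<in> (E \<inter> ((V - B) \<times> (V - B)))\<^sup>*"

definition separator :: "'a set \<Rightarrow> ('a \<times> 'a) set \<Rightarrow> 'a set \<Rightarrow> 'a set \<Rightarrow> 'a set \<Rightarrow> bool" where
  "separator V E X Y K \<longleftrightarrow> K \<subseteq> V - (X \<union> Y) \<and>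
     \<not> (\<exists>x\<in>X. \<exists>y\<in>Y. reach_avoid V E K x y)"

definition NR :: "'a set \<Rightarrow> ('a \<times> 'a) set \<Rightarrow> 'a set \<Rightarrow> 'a set \<Rightarrow> 'a set" where
  "NR V E A B = {v \<in> V. \<not> (\<exists>a\<in>A. reach_avoid V E B a v)}"

definition minimal_separator :: "'a set \<Rightarrow> ('a \<times> 'a) set \<Rightarrow> 'a set \<Rightarrow> 'a set \<Rightarrow> 'a set \<Rightarrow> bool" where
  "minimal_separator V E X Y K \<longleftrightarrow> separator V E X Y K \<and>
     (\<forall>K'. K' \<subset> K \<longrightarrow> \<not> separator V E X Y K')"

definition important_separator :: "'a set \<Rightarrow> ('a \<times> 'a) set \<Rightarrow> 'a set \<Rightarrow> 'a set \<Rightarrow> 'a set \<Rightarrow> bool" where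
  "important_separator V E X Y K \<longleftrightarrow> minimal_separator V E X Y K \<and>
     \<not> (\<exists>K'. separator V E X Y K' \<and> NR V E Y K \<subset> NR V E Y K' \<and> card K \<ge> card K')"

definition min_important_size :: "'a set \<Rightarrow> ('a \<times> 'a) set \<Rightarrow> 'a set \<Rightarrow> 'a set \<Rightarrow> nat" where
  "min_important_size V E X Y = (LEAST n. \<exists>K. important_separator V E X Y K \<and> card K = n)"

definition excess :: "'a set \<Rightarrow> ('a \<times> 'a) set \<Rightarrow> 'a set \<Rightarrow> 'a set \<Rightarrow> 'a set \<Rightarrow> nat" where
  "excess V E X Y S = card S - min_important_size V E X Y"

end

theory Submission
  imports Defs "HOL-Library.Countable"
begin


lemma rtr_map:
  assumes "inj f"
  shows "((f a, f b) \<in> (map_prod f f ` R)\<^sup>*) \<longleftrightarrow> (a, b) \<in> R\<^sup>*"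
proof
  assume H: "(f a, f b) \<in> (map_prod f f ` R)\<^sup>*"
  have gen: "\<exists>b. q = f b \<and> (a, b) \<in> R\<^sup>*" if "(p,q) \<in> (map_prod f f ` R)\<^sup>*" "p = f a" for p q
    using that
  proof (induction rule: rtrancl_induct)
    case base
    then show ?case by auto
  next
    case (step y z)
    then obtain u v where uv: "(u,v) \<in> R" "y = f u" "z = f v" by auto
    from step obtain b' where "y = f b'" "(a, b') \<in> R\<^sup>*" by auto
    then have "(a, u) \<in> R\<^sup>*" using uv assms by (auto dest: injD)
    then have "(a, v) \<in> R\<^sup>*" using uv by auto
    then show ?case using uv by auto
  qed
  from gen[OF H] obtain b' where "f b = f b'" "(a, b') \<in> R\<^sup>*" by auto
  then show "(a, b) \<in> R\<^sup>*" using assms by (auto dest: injD)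
next
  assume "(a, b) \<in> R\<^sup>*"
  then show "(f a, f b) \<in> (map_prod f f ` R)\<^sup>*"
  proof (induction rule: rtrancl_induct)
    case base then show ?case by simp
  next
    case (step y z)
    then have "(f y, f z) \<in> map_prod f f ` R" by force
    then show ?case using step by (meson rtrancl.rtrancl_into_rtrancl)
  qed
qed

lemma map_inter:
  assumes "inj f"
  shows "map_prod f f ` E \<inter> ((f ` V - f ` B) \<times> (f ` V - f ` B)) = map_prod f f ` (E \<inter> ((V - B) \<times> (V - B)))"
  using assms by (auto simp: inj_eq image_iff)

lemma reach_map:
  assumes "inj f"
  shows "reach_avoid (f ` V) (map_prod f f ` E) (f ` B) (f a) (f b) = reach_avoid V E B a b"
  unfolding reach_avoid_def map_inter[OF assms] rtr_map[OF assms]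
  using assms by (auto simp: inj_eq image_iff)

lemma sep_map:
  assumes "inj f"
  shows "separator (f ` V) (map_prod f f ` E) (f ` X) (f ` Y) (f ` K) = separator V E X Y K"
  unfolding separator_def using assms
  by (auto simp: reach_map[OF assms] inj_eq image_iff image_subset_iff)

lemma sep_range:
  assumes "separator (f ` V) E' X Y K'"
  shows "K' = f ` (f -` K')"
  using assms unfolding separator_def by blast

lemma NR_map:
  assumes "inj f"
  shows "NR (f ` V) (map_prod f f ` E) (f ` Y) (f ` K) = f ` NR V E Y K"
  unfolding NR_def using assms by (auto simp: reach_map[OF assms])

lemma min_map:
  assumes "inj f"
  shows "minimal_separator (f ` V) (map_prod f f ` E) (f ` X) (f ` Y) (f ` K) = minimal_separator V E X Y K"
proof -
  have "(\<forall>K'. K' \<subset> f ` K \<longrightarrow> \<not> separator (f ` V) (map_prod f f ` E) (f ` X) (f ` Y) K')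
     = (\<forall>K'. K' \<subset> K \<longrightarrow> \<not> separator V E X Y K')"
  proof
    assume H: "\<forall>K'. K' \<subset> f ` K \<longrightarrow> \<not> separator (f ` V) (map_prod f f ` E) (f ` X) (f ` Y) K'"
    show "\<forall>K'. K' \<subset> K \<longrightarrow> \<not> separator V E X Y K'"
    proof (intro allI impI)
      fix K' assume "K' \<subset> K"
      then have "f ` K' \<subset> f ` K" using assms by (simp add: inj_image_subset_iff psubset_eq inj_image_eq_iff)
      then show "\<not> separator V E X Y K'" using H sep_map[OF assms] by metis
    qed
  next
    assume H: "\<forall>K'. K' \<subset> K \<longrightarrow> \<not> separator V E X Y K'"
    show "\<forall>K'. K' \<subset> f ` K \<longrightarrow> \<not> separator (f ` V) (map_prod f f ` E) (f ` X) (f ` Y) K'"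
    proof (intro allI impI notI)
      fix K' assume a: "K' \<subset> f ` K" "separator (f ` V) (map_prod f f ` E) (f ` X) (f ` Y) K'"
      let ?K = "f -` K'"
      have e: "K' = f ` ?K" using sep_range[OF a(2)] .
      have "?K \<subset> K" using a(1) e assms
        by (metis inj_image_subset_iff psubset_eq)
      moreover have "separator V E X Y ?K" using a(2) e sep_map[OF assms] by metis
      ultimately show False using H by blast
    qed
  qed
  then show ?thesis unfolding minimal_separator_def sep_map[OF assms] by simp
qed

lemma inj_psub: "inj f \<Longrightarrow> (f ` A \<subset> f ` B) = (A \<subset> B)"
  by (simp add: inj_image_subset_iff psubset_eq inj_image_eq_iff)

lemma imp_map:
  assumes "inj f"
  shows "important_separator (f ` V) (map_prod f f ` E) (f ` X) (f ` Y) (f ` K) = important_separator V E X Y K"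
proof -
  have c: "card (f ` A) = card A" for A using assms by (simp add: card_image inj_on_subset)
  have "(\<exists>K'. separator (f ` V) (map_prod f f ` E) (f ` X) (f ` Y) K' \<and> NR (f ` V) (map_prod f f ` E) (f ` Y) (f ` K) \<subset> NR (f ` V) (map_prod f f ` E) (f ` Y) K' \<and> card (f ` K) \<ge> card K')
     = (\<exists>K'. separator V E X Y K' \<and> NR V E Y K \<subset> NR V E Y K' \<and> card K \<ge> card K')"
  proof
    assume "\<exists>K'. separator (f ` V) (map_prod f f ` E) (f ` X) (f ` Y) K' \<and> NR (f ` V) (map_prod f f ` E) (f ` Y) (f ` K) \<subset> NR (f ` V) (map_prod f f ` E) (f ` Y) K' \<and> card (f ` K) \<ge> card K'"
    then obtain K' where a: "separator (f ` V) (map_prod f f ` E) (f ` X) (f ` Y) K'"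
      "NR (f ` V) (map_prod f f ` E) (f ` Y) (f ` K) \<subset> NR (f ` V) (map_prod f f ` E) (f ` Y) K'"
      "card (f ` K) \<ge> card K'" by blast
    obtain K0 where e: "K' = f ` K0" using sep_range[OF a(1)] by blast
    have 1: "separator V E X Y K0" using a(1) unfolding e sep_map[OF assms] .
    have "f ` NR V E Y K \<subset> f ` NR V E Y K0"
      using a(2) unfolding e NR_map[OF assms] .
    then have 2: "NR V E Y K \<subset> NR V E Y K0" unfolding inj_psub[OF assms] .
    have 3: "card K \<ge> card K0" using a(3) unfolding e c .
    show "\<exists>K'. separator V E X Y K' \<and> NR V E Y K \<subset> NR V E Y K' \<and> card K \<ge> card K'"
      using 1 2 3 by (intro exI conjI)
  next
    assume "\<exists>K'. separator V E X Y K' \<and> NR V E Y K \<subset> NR V E Y K' \<and> card K \<ge> card K'"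
    then obtain K' where a: "separator V E X Y K'" "NR V E Y K \<subset> NR V E Y K'" "card K \<ge> card K'" by blast
    have 1: "separator (f ` V) (map_prod f f ` E) (f ` X) (f ` Y) (f ` K')" using a(1) sep_map[OF assms] by simp
    have 2: "NR (f ` V) (map_prod f f ` E) (f ` Y) (f ` K) \<subset> NR (f ` V) (map_prod f f ` E) (f ` Y) (f ` K')"
      unfolding NR_map[OF assms] inj_psub[OF assms] by (rule a(2))
    have 3: "card (f ` K) \<ge> card (f ` K')" using a(3) c by simp
    show "\<exists>K'. separator (f ` V) (map_prod f f ` E) (f ` X) (f ` Y) K' \<and> NR (f ` V) (map_prod f f ` E) (f ` Y) (f ` K) \<subset> NR (f ` V) (map_prod f f ` E) (f ` Y) K' \<and> card (f ` K) \<ge> card K'"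
      using 1 2 3 by (intro exI conjI)
  qed
  then show ?thesis unfolding important_separator_def min_map[OF assms] by (simp only:)
qed

lemma imp_range:
  assumes "important_separator (f ` V) E' X Y K'"
  shows "K' = f ` (f -` K')"
proof -
  have "separator (f ` V) E' X Y K'" using assms unfolding important_separator_def minimal_separator_def by blast
  then show ?thesis by (rule sep_range)
qed

lemma mis_map:
  assumes "inj f"
  shows "min_important_size (f ` V) (map_prod f f ` E) (f ` X) (f ` Y) = min_important_size V E X Y"
proof -
  have c: "card (f ` A) = card A" for A using assms by (simp add: card_image inj_on_subset)
  have "(\<exists>K. important_separator (f ` V) (map_prod f f ` E) (f ` X) (f ` Y) K \<and> card K = n)
    = (\<exists>K. important_separator V E X Y K \<and> card K = n)" for n
  proof
    assume "\<exists>K. important_separator (f ` V) (map_prod f f ` E) (f ` X) (f ` Y) K \<and> card K = n"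
    then obtain K where K: "important_separator (f ` V) (map_prod f f ` E) (f ` X) (f ` Y) K" "card K = n" by blast
    obtain K0 where e: "K = f ` K0" using imp_range[OF K(1)] by blast
    have "important_separator V E X Y K0" using K(1) unfolding e imp_map[OF assms] .
    moreover have "card K0 = n" using K(2) unfolding e c .
    ultimately show "\<exists>K. important_separator V E X Y K \<and> card K = n" by (intro exI conjI)
  next
    assume "\<exists>K. important_separator V E X Y K \<and> card K = n"
    then obtain K where K: "important_separator V E X Y K" "card K = n" by blast
    then have "important_separator (f ` V) (map_prod f f ` E) (f ` X) (f ` Y) (f ` K)" "card (f ` K) = n"
      by (simp_all only: imp_map[OF assms] c)
    then show "\<exists>K. important_separator (f ` V) (map_prod f f ` E) (f ` X) (f ` Y) K \<and> card K = n" by (intro exI conjI)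
  qed
  then show ?thesis unfolding min_important_size_def by (simp only:)
qed

lemma exc_map:
  assumes "inj f"
  shows "excess (f ` V) (map_prod f f ` E) (f ` X) (f ` Y) (f ` K) = excess V E X Y K"
  unfolding excess_def mis_map[OF assms] using assms by (simp add: card_image inj_on_subset)

lemma union_map:
  assumes "inj f"
  shows "\<Union>{S. important_separator (f ` V) (map_prod f f ` E) (f ` X) (f ` Y) S \<and> excess (f ` V) (map_prod f f ` E) (f ` X) (f ` Y) S \<le> x}
    = f ` \<Union>{S. important_separator V E X Y S \<and> excess V E X Y S \<le> x}" (is "?L = ?R")
proof
  show "?L \<subseteq> ?R"
  proof
    fix v assume "v \<in> ?L"
    then obtain S where S: "important_separator (f ` V) (map_prod f f ` E) (f ` X) (f ` Y) S"
      "excess (f ` V) (map_prod f f ` E) (f ` X) (f ` Y) S \<le> x" "v \<in> S" by blast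
    obtain S0 where e: "S = f ` S0" using imp_range[OF S(1)] by blast
    have "important_separator V E X Y S0" "excess V E X Y S0 \<le> x"
      using S(1,2) unfolding e imp_map[OF assms] exc_map[OF assms] by simp_all
    moreover obtain u where "u \<in> S0" "v = f u" using S(3) e by blast
    ultimately show "v \<in> ?R" by (intro image_eqI[of v f u] UnionI[of S0]) auto
  qed
next
  show "?R \<subseteq> ?L"
  proof
    fix v assume "v \<in> ?R"
    then obtain S u where S: "important_separator V E X Y S" "excess V E X Y S \<le> x" "u \<in> S" "v = f u" by blast
    then have "important_separator (f ` V) (map_prod f f ` E) (f ` X) (f ` Y) (f ` S)"
      "excess (f ` V) (map_prod f f ` E) (f ` X) (f ` Y) (f ` S) \<le> x"
      by (simp_all only: imp_map[OF assms] exc_map[OF assms])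
    then show "v \<in> ?L" using S(3,4) by (intro UnionI[of "f ` S"]) auto
  qed
qed

lemma ugraph_map:
  assumes "inj f" "ugraph V E"
  shows "ugraph (f ` V) (map_prod f f ` E)"
  using assms unfolding ugraph_def sym_def irrefl_def
  by (auto simp: inj_eq)




datatype vt = S | T | Nd nat "bool list"

fun par :: "vt \<Rightarrow> vt" where
  "par (Nd c []) = S"
| "par (Nd c (b # cs)) = Nd c cs"
| "par S = S"
| "par T = T"

fun desc :: "vt \<Rightarrow> vt \<Rightarrow> bool" where
  "desc (Nd c cs) (Nd c' cs') = (c = c' \<and> (\<exists>ds. cs' = ds @ cs))"
| "desc _ _ = False"

lemma desc_refl: "desc (Nd c cs) (Nd c cs)" by auto

lemma desc_chain: "desc a v \<Longrightarrow> desc b v \<Longrightarrow> desc a b \<or> desc b a"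
  by (cases a; cases b; cases v) (auto simp: append_eq_append_conv2)

lemma desc_par: "desc a v \<Longrightarrow> a \<noteq> v \<Longrightarrow> desc a (par v)"
proof (cases a; cases v)
  fix c cs c' cs' assume "desc a v" "a \<noteq> v" "a = Nd c cs" "v = Nd c' cs'"
  then obtain ds where "cs' = ds @ cs" "c = c'" "ds \<noteq> []" by auto
  then show "desc a (par v)" using \<open>a = _\<close> \<open>v = _\<close> by (cases ds) auto
qed auto

lemma desc_parI: "desc a (par v) \<Longrightarrow> v \<noteq> S \<Longrightarrow> desc a v"
proof (cases a; cases v)
  fix c cs c' cs' assume "desc a (par v)" "a = Nd c cs" "v = Nd c' cs'"
  then show "desc a v" by (cases cs') (auto intro: exI[of _ "_ # _"])
qed auto

lemma desc_up:
  assumes cl: "\<forall>v\<in>C. par v \<in> C" and "desc a v" "v \<in> C"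
  shows "a \<in> C"
proof (cases a; cases v)
  fix c cs c' cs' assume h: "a = Nd c cs" "v = Nd c' cs'"
  then obtain ds where ds: "cs' = ds @ cs" "c = c'" using assms by auto
  have "Nd c (ds @ cs) \<in> C \<Longrightarrow> Nd c cs \<in> C" for ds
  proof (induction ds)
    case (Cons d ds) then show ?case using cl by (metis par.simps(2) append_Cons)
  qed simp
  then show "a \<in> C" using assms h ds by auto
qed (use assms in auto)

locale tr =
  fixes r D :: nat
  assumes r1: "r \<ge> 1" and D1: "D \<ge> 1"
begin

definition VV :: "vt set" where
  "VV = {S, T} \<union> {Nd c cs | c cs. c < r \<and> length cs \<le> D}"

inductive dn :: "vt \<Rightarrow> vt \<Rightarrow> bool" where
  dS: "c < r \<Longrightarrow> dn S (Nd c [])"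
| dN: "c < r \<Longrightarrow> length cs < D \<Longrightarrow> dn (Nd c cs) (Nd c (b # cs))"
| dT: "c < r \<Longrightarrow> length cs = D \<Longrightarrow> dn (Nd c cs) T"

definition EE :: "(vt \<times> vt) set" where
  "EE = {(a, b). dn a b \<or> dn b a}"

definition rel :: "vt set \<Rightarrow> (vt \<times> vt) set" where
  "rel K = EE \<inter> ((VV - K) \<times> (VV - K))"

lemma VV_Nd[simp]: "Nd c cs \<in> VV \<longleftrightarrow> c < r \<and> length cs \<le> D"
  by (auto simp: VV_def)
lemma VV_S[simp]: "S \<in> VV" and VV_T[simp]: "T \<in> VV" by (auto simp: VV_def)

lemma finite_VV: "finite VV"
proof -
  have "VV = {S, T} \<union> (\<lambda>(c, cs). Nd c cs) ` ({..<r} \<times> {cs. set cs \<subseteq> UNIV \<and> length cs \<le> D})"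
    by (auto simp: VV_def)
  then show ?thesis using finite_lists_length_le[of "UNIV :: bool set" D] by simp
qed

lemma dn_VV: "dn a b \<Longrightarrow> a \<in> VV \<and> b \<in> VV"
  by (induction rule: dn.induct) auto

lemma dn_irr: "dn a b \<Longrightarrow> a \<noteq> b"
  by (induction rule: dn.induct) auto

lemma ugraph_VV: "ugraph VV EE"
  unfolding ugraph_def EE_def sym_def irrefl_def
  using finite_VV dn_VV dn_irr by blast

lemma dn_par: "dn u v \<Longrightarrow> v \<noteq> T \<Longrightarrow> u = par v \<and> v \<noteq> S"
  by (induction rule: dn.induct) auto

lemma nbr: "(u, v) \<in> EE \<Longrightarrow> u \<noteq> T \<Longrightarrow> v \<noteq> T \<Longrightarrow> (u = par v \<and> v \<noteq> S) \<or> (v = par u \<and> u \<noteq> S)"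
  unfolding EE_def using dn_par by auto

lemma par_dn: "v \<in> VV \<Longrightarrow> v \<noteq> S \<Longrightarrow> v \<noteq> T \<Longrightarrow> dn (par v) v"
proof (cases v)
  case (Nd c cs)
  assume "v \<in> VV"
  then show ?thesis using Nd by (cases cs) (auto intro: dn.intros)
qed auto

lemma rel_sym: "sym ((rel K)\<^sup>*)"
  apply (rule sym_rtrancl)
  unfolding rel_def EE_def sym_def by auto

lemma rtr_end: "(a, b) \<in> (rel K)\<^sup>* \<Longrightarrow> a \<noteq> b \<Longrightarrow> b \<in> VV - K"
  by (induction rule: rtrancl_induct) (auto simp: rel_def)

lemma relI: "(a, b) \<in> EE \<Longrightarrow> a \<in> VV - K \<Longrightarrow> b \<in> VV - K \<Longrightarrow> (a, b) \<in> rel K"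
  by (simp add: rel_def)

lemma dnE: "dn a b \<Longrightarrow> (a, b) \<in> EE" "dn a b \<Longrightarrow> (b, a) \<in> EE"
  by (auto simp: EE_def)

definition Lset :: "nat \<Rightarrow> bool list \<Rightarrow> vt set" where
  "Lset c cs = {Nd c (replicate j False @ cs) | j. j + length cs \<le> D}"

lemma Lset_self: "length cs \<le> D \<Longrightarrow> Nd c cs \<in> Lset c cs"
  unfolding Lset_def by (auto intro: exI[of _ 0])

lemma Lset_desc: "v \<in> Lset c cs \<Longrightarrow> desc (Nd c cs) v"
  unfolding Lset_def by auto

lemma esc:
  assumes "c < r" "length cs \<le> D" "T \<notin> K" "Lset c cs \<inter> K = {}"
  shows "(Nd c cs, T) \<in> (rel K)\<^sup>*"
  using assms
proof (induction "D - length cs" arbitrary: cs)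
  case 0
  then have "length cs = D" by simp
  then have "(Nd c cs, T) \<in> rel K"
    using 0 Lset_self[of cs c] by (intro relI dnE dT) auto
  then show ?case by auto
next
  case (Suc n)
  have l: "length (False # cs) \<le> D" using Suc by simp
  have sub: "Lset c (False # cs) \<subseteq> Lset c cs"
    unfolding Lset_def
    apply clarify
    subgoal for v j by (rule exI[of _ "Suc j"]) (simp add: replicate_app_Cons_same)
    done
  then have "(Nd c (False # cs), T) \<in> (rel K)\<^sup>*"
    using Suc l by (intro Suc.hyps) auto
  moreover have "(Nd c cs, Nd c (False # cs)) \<in> rel K"
    using Suc Lset_self[of cs c] Lset_self[of "False # cs" c] l sub
    by (intro relI dnE dN) auto
  ultimately show ?case by (meson converse_rtrancl_into_rtrancl)
qed

definition upc :: "vt set \<Rightarrow> bool" where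
  "upc C \<longleftrightarrow> S \<in> C \<and> T \<notin> C \<and> C \<subseteq> VV \<and> (\<forall>v\<in>C. par v \<in> C)"

definition KC :: "vt set \<Rightarrow> vt set" where
  "KC C = {v \<in> VV. v \<noteq> S \<and> v \<noteq> T \<and> v \<notin> C \<and> par v \<in> C}"

lemma KC_Nd: "k \<in> KC C \<Longrightarrow> \<exists>c cs. k = Nd c cs \<and> c < r \<and> length cs \<le> D"
  unfolding KC_def by (cases k) auto

lemma reachC:
  assumes "upc C" "C \<inter> K = {}" "v \<in> C"
  shows "(S, v) \<in> (rel K)\<^sup>*"
proof -
  have "\<forall>c. Nd c cs \<in> C \<longrightarrow> (S, Nd c cs) \<in> (rel K)\<^sup>*" for cs
  proof (induction cs)
    case Nil
    show ?case
    proof (intro allI impI)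
      fix c assume "Nd c [] \<in> C"
      moreover have "par (Nd c []) \<in> C" using assms(1) calculation unfolding upc_def by blast
      ultimately have "(S, Nd c []) \<in> rel K" using assms
        by (intro relI dnE dS) (auto simp: upc_def)
      then show "(S, Nd c []) \<in> (rel K)\<^sup>*" by auto
    qed
  next
    case (Cons b cs)
    show ?case
    proof (intro allI impI)
      fix c assume h: "Nd c (b # cs) \<in> C"
      then have p: "Nd c cs \<in> C" using assms(1) unfolding upc_def by (metis par.simps(2))
      have "(Nd c cs, Nd c (b # cs)) \<in> rel K" using h p assms
        by (intro relI dnE dN) (auto simp: upc_def)
      then show "(S, Nd c (b # cs)) \<in> (rel K)\<^sup>*" using Cons p by (meson rtrancl_into_rtrancl)
    qed
  qed
  then show ?thesis using assms by (cases v) (auto simp: upc_def)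
qed

lemma KC_disj:
  assumes "upc C" "k1 \<in> KC C" "k2 \<in> KC C" "desc k1 v" "desc k2 v"
  shows "k1 = k2"
proof (rule ccontr)
  assume ne: "k1 \<noteq> k2"
  have cl: "\<forall>v\<in>C. par v \<in> C" using assms unfolding upc_def by blast
  from desc_chain[OF assms(4,5)] show False
  proof
    assume "desc k1 k2"
    then have "desc k1 (par k2)" using desc_par ne by blast
    then have "k1 \<in> C" using desc_up[OF cl] assms(3) unfolding KC_def by blast
    then show False using assms(2) unfolding KC_def by blast
  next
    assume "desc k2 k1"
    then have "desc k2 (par k1)" using desc_par ne by metis
    then have "k2 \<in> C" using desc_up[OF cl] assms(2) unfolding KC_def by blast
    then show False using assms(3) unfolding KC_def by blast
  qed
qed

end


context tr begin

definition noleaf :: "vt set \<Rightarrow> bool" where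
  "noleaf C \<longleftrightarrow> (\<forall>c cs. Nd c cs \<in> C \<longrightarrow> length cs < D)"

lemma reach_def': "reach_avoid VV EE K a b \<longleftrightarrow> a \<in> VV - K \<and> (a, b) \<in> (rel K)\<^sup>*"
  unfolding reach_avoid_def rel_def by simp

lemma sepI: "K \<subseteq> VV - {S, T} \<Longrightarrow> S \<notin> K \<Longrightarrow> (S, T) \<notin> (rel K)\<^sup>* \<Longrightarrow> separator VV EE {S} {T} K"
  unfolding separator_def reach_def' by auto

lemma sepD: "separator VV EE {S} {T} K \<Longrightarrow> (S, T) \<notin> (rel K)\<^sup>* \<and> K \<subseteq> VV - {S, T}"
  unfolding separator_def reach_def' by auto

lemma KC_sub: "KC C \<subseteq> VV - {S, T}" unfolding KC_def by auto

lemma sepKC: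
  assumes "upc C" "noleaf C"
  shows "separator VV EE {S} {T} (KC C)"
proof (rule sepI[OF KC_sub])
  show "S \<notin> KC C" by (simp add: KC_def)
  have "v \<in> C" if "(S, v) \<in> (rel (KC C))\<^sup>*" for v
    using that
  proof (induction rule: rtrancl_induct)
    case base then show ?case using assms unfolding upc_def by auto
  next
    case (step y z)
    then have e: "(y, z) \<in> EE" "z \<in> VV" "z \<notin> KC C" unfolding rel_def by auto
    have yT: "y \<noteq> T" using step assms unfolding upc_def by auto
    show ?case
    proof (cases "z = T")
      case True
      then have "dn y T" using e yT unfolding EE_def by (auto elim: dn.cases)
      then show ?thesis using step assms(2) unfolding noleaf_def by (auto elim: dn.cases)
    next
      case False
      from nbr[OF e(1) yT False] show ?thesis
      proof
        assume "y = par z \<and> z \<noteq> S"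
        then show ?thesis using e step False unfolding KC_def by auto
      next
        assume "z = par y \<and> y \<noteq> S"
        then show ?thesis using step assms unfolding upc_def by auto
      qed
    qed
  qed
  then show "(S, T) \<notin> (rel (KC C))\<^sup>*" using assms unfolding upc_def by auto
qed

lemma finite_sub: "K \<subseteq> VV - {S,T} \<Longrightarrow> finite K"
  using finite_VV finite_subset by blast

lemma hitL:
  assumes "upc C" "separator VV EE {S} {T} K" "C \<inter> K = {}" "k \<in> KC C" "k = Nd c cs"
  shows "Lset c cs \<inter> K \<noteq> {}"
proof
  assume L: "Lset c cs \<inter> K = {}"
  have k: "c < r" "length cs \<le> D" using assms KC_Nd by auto
  have sT: "(S, T) \<notin> (rel K)\<^sup>*" "T \<notin> K" using sepD[OF assms(2)] by auto
  have pk: "par k \<in> C" "k \<in> VV" "k \<noteq> S" "k \<noteq> T" using assms(4) unfolding KC_def by auto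
  have "(S, par k) \<in> (rel K)\<^sup>*" using reachC[OF assms(1,3) pk(1)] .
  moreover have "(par k, k) \<in> rel K"
    using pk par_dn[of k] assms(1,3) L Lset_self[OF k(2), of c] assms(5)
    by (intro relI dnE) (auto simp: upc_def)
  moreover have "(k, T) \<in> (rel K)\<^sup>*" using esc[OF k sT(2) L] assms(5) by simp
  ultimately show False using sT by (meson rtrancl_into_rtrancl rtrancl_trans)
qed

lemma lowbound:
  assumes "upc C" "separator VV EE {S} {T} K" "C \<inter> K = {}"
  shows "card (KC C) \<le> card K"
proof -
  define g where "g k = (SOME v. v \<in> K \<and> desc k v)" for k
  have g: "g k \<in> K \<and> desc k (g k)" if hk: "k \<in> KC C" for k
  proof -
    obtain c cs where k: "k = Nd c cs" using KC_Nd[OF hk] by blast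
    then obtain v where "v \<in> Lset c cs \<inter> K" using hitL[OF assms hk] by blast
    then have "\<exists>v. v \<in> K \<and> desc k v" using Lset_desc k by blast
    then show ?thesis unfolding g_def by (rule someI_ex)
  qed
  have "inj_on g (KC C)"
    by (rule inj_onI) (metis g KC_disj[OF assms(1)])
  moreover have "g ` KC C \<subseteq> K" using g by blast
  moreover have "finite K" using sepD[OF assms(2)] finite_sub by blast
  ultimately show ?thesis by (simp add: card_inj_on_le)
qed

end


context tr begin

lemma LL_disj: "Lset c cs \<inter> Lset c (True # cs) = {}"
proof -
  have "replicate j False @ cs \<noteq> replicate i False @ True # cs" for i j
  proof
    assume h: "replicate j False @ cs = replicate i False @ True # cs"
    have "length (replicate j False @ cs) = length (replicate i False @ True # cs)" using h by simp
    then have "j = Suc i" by simp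
    then show False using h by (simp add: replicate_app_Cons_same[symmetric])
  qed
  then show ?thesis unfolding Lset_def by auto
qed

lemma LsetT_desc: "v \<in> Lset c (b # cs) \<Longrightarrow> desc (Nd c cs) v"
  unfolding Lset_def by auto

lemma NR_KC: "k \<in> KC C \<Longrightarrow> k \<in> NR VV EE {T} (KC C)"
  unfolding NR_def reach_def' using rtr_end[of T k "KC C"] by (auto simp: KC_def)

lemma noreach_hit:
  assumes "c < r" "length cs \<le> D" "T \<notin> K" "(T, Nd c cs) \<notin> (rel K)\<^sup>*"
  shows "Lset c cs \<inter> K \<noteq> {}"
proof
  assume "Lset c cs \<inter> K = {}"
  then have "(Nd c cs, T) \<in> (rel K)\<^sup>*" using esc assms by blast
  then show False using assms rel_sym by (meson symD)
qed

lemma importantKC: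
  assumes C: "upc C" "noleaf C" and lk: "\<And>c cs. Nd c cs \<in> KC C \<Longrightarrow> length cs < D"
  shows "important_separator VV EE {S} {T} (KC C)"
  unfolding important_separator_def minimal_separator_def
proof (intro conjI)
  show sep: "separator VV EE {S} {T} (KC C)" using sepKC[OF C] .
  have CK: "C \<inter> KC C = {}" unfolding KC_def by auto
  show "\<forall>K''. K'' \<subset> KC C \<longrightarrow> \<not> separator VV EE {S} {T} K''"
  proof (intro allI impI notI)
    fix K'' assume a: "K'' \<subset> KC C" "separator VV EE {S} {T} K''"
    then obtain k where k: "k \<in> KC C" "k \<notin> K''" by blast
    obtain c cs where kc: "k = Nd c cs" "c < r" "length cs \<le> D" using KC_Nd[OF k(1)] by blast
    have L: "Lset c cs \<inter> K'' = {}"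
    proof (rule ccontr)
      assume "Lset c cs \<inter> K'' \<noteq> {}"
      then obtain v where v: "v \<in> Lset c cs" "v \<in> K''" by blast
      then have "desc k v" "v \<in> KC C" using Lset_desc kc a by auto
      moreover have "desc v v" using v(1) unfolding Lset_def by auto
      ultimately have "v = k" using KC_disj[OF C(1) k(1)] by blast
      then show False using v k by simp
    qed
    show False using hitL[OF C(1) a(2) _ k(1) kc(1)] CK a(1) L by blast
  qed
  show "\<not> (\<exists>K'. separator VV EE {S} {T} K' \<and> NR VV EE {T} (KC C) \<subset> NR VV EE {T} K' \<and> card (KC C) \<ge> card K')"
  proof
  assume "\<exists>K'. separator VV EE {S} {T} K' \<and> NR VV EE {T} (KC C) \<subset> NR VV EE {T} K' \<and> card K' \<le> card (KC C)"
  then obtain K' where K': "separator VV EE {S} {T} K'" "NR VV EE {T} (KC C) \<subset> NR VV EE {T} K'"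
    "card K' \<le> card (KC C)" by blast
  have fK': "finite K'" "T \<notin> K'" using sepD[OF K'(1)] finite_sub by auto
  have fK: "finite (KC C)" using KC_sub finite_sub by blast
  have nr: "(T, k) \<notin> (rel K')\<^sup>*" if "k \<in> KC C" for k
  proof -
    have "k \<in> NR VV EE {T} K'" using NR_KC[OF that] K'(2) by blast
    then show ?thesis unfolding NR_def reach_def' using fK' by auto
  qed
  have hit1: "Lset c cs \<inter> K' \<noteq> {}" if "Nd c cs \<in> KC C" for c cs
    using noreach_hit[OF _ _ fK'(2) nr[OF that]] KC_Nd[OF that] by auto
  have hit2: "Lset c (True # cs) \<inter> K' \<noteq> {}" if k: "Nd c cs \<in> KC C" "Nd c cs \<notin> K'" for c cs
  proof
    assume L: "Lset c (True # cs) \<inter> K' = {}"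
    have l: "length cs < D" "c < r" using lk k KC_Nd[OF k(1)] by auto
    have "(Nd c (True # cs), T) \<in> (rel K')\<^sup>*" using esc[OF l(2) _ fK'(2) L] l by simp
    moreover have "(Nd c cs, Nd c (True # cs)) \<in> rel K'"
      using k l L Lset_self[of "True # cs" c] by (intro relI dnE dN) auto
    ultimately have "(Nd c cs, T) \<in> (rel K')\<^sup>*" by (meson converse_rtrancl_into_rtrancl)
    then show False using nr[OF k(1)] rel_sym by (meson symD)
  qed
  show False
  proof (cases "KC C \<subseteq> K'")
    case True
    then have "KC C = K'" using card_seteq[OF fK'(1) True K'(3)] by simp
    then show False using K'(2) by simp
  next
    case False
    then obtain k0 where k0: "k0 \<in> KC C" "k0 \<notin> K'" by blast
    obtain c0 cs0 where kc0: "k0 = Nd c0 cs0" using KC_Nd[OF k0(1)] by blast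
    obtain e where e: "e \<in> Lset c0 (True # cs0)" "e \<in> K'" using hit2 k0 kc0 by blast
    define g where "g k = (SOME v. v \<in> K' \<and> v \<in> Lset (case k of Nd c cs \<Rightarrow> c) (case k of Nd c cs \<Rightarrow> cs))" for k
    have g: "g k \<in> K' \<and> g k \<in> Lset c cs" if "k \<in> KC C" "k = Nd c cs" for k c cs
    proof -
      have "\<exists>v. v \<in> K' \<and> v \<in> Lset c cs" using hit1 that by blast
      from someI_ex[OF this] show ?thesis unfolding g_def using that(2) by simp
    qed
    have gd: "g k \<in> K' \<and> desc k (g k)" if "k \<in> KC C" for k
      using g[OF that] KC_Nd[OF that] Lset_desc by blast
    have inj: "inj_on g (KC C)"
      by (rule inj_onI) (metis gd KC_disj[OF C(1)])
    have "e \<notin> g ` KC C"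
    proof
      assume "e \<in> g ` KC C"
      then obtain k where k: "k \<in> KC C" "e = g k" by blast
      have "desc k0 e" using LsetT_desc e kc0 by blast
      then have "k = k0" using KC_disj[OF C(1) k(1) k0(1)] gd[OF k(1)] k by blast
      then have "e \<in> Lset c0 cs0" using g[OF k0(1) kc0] k by simp
      then show False using LL_disj e by blast
    qed
    then have "card (insert e (g ` KC C)) = Suc (card (KC C))"
      using card_image[OF inj] fK by simp
    moreover have "insert e (g ` KC C) \<subseteq> K'" using e gd by blast
    ultimately have "Suc (card (KC C)) \<le> card K'" by (metis card_mono fK'(1))
    then show False using K'(3) by simp
  qed
  qed
qed

end


context tr begin

definition Cw :: "nat \<Rightarrow> bool list \<Rightarrow> vt set" where
  "Cw c bs = insert S {Nd c (drop (Suc m) bs) | m. m < length bs}"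

lemma Cw_Nil: "Cw c [] = {S}" by (simp add: Cw_def)

lemma Cw_Cons: "Cw c (b # bs) = insert (Nd c bs) (Cw c bs)"
proof -
  have "{Nd c (drop (Suc m) (b # bs)) | m. m < length (b # bs)} = insert (Nd c bs) {Nd c (drop (Suc m) bs) | m. m < length bs}"
    (is "?A = ?B")
  proof
    show "?A \<subseteq> ?B"
    proof
      fix v assume "v \<in> ?A"
      then obtain m where m: "v = Nd c (drop m bs)" "m < Suc (length bs)" by auto
      then show "v \<in> ?B" by (cases m) auto
    qed
  next
    show "?B \<subseteq> ?A"
    proof
      fix v assume "v \<in> ?B"
      then consider "v = Nd c bs" | m where "v = Nd c (drop (Suc m) bs)" "m < length bs" by auto
      then show "v \<in> ?A"
      proof cases
        case 1 then show ?thesis by (auto intro!: exI[of _ 0])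
      next
        case 2 then show ?thesis by (auto intro!: exI[of _ "Suc m"])
      qed
    qed
  qed
  then show ?thesis unfolding Cw_def by auto
qed

lemma Cw_len: "Nd c' cs \<in> Cw c bs \<Longrightarrow> c' = c \<and> length cs < length bs"
proof (induction bs)
  case Nil then show ?case by (simp add: Cw_Nil)
next
  case (Cons b bs)
  from Cons.prems have "Nd c' cs = Nd c bs \<or> Nd c' cs \<in> Cw c bs" by (simp add: Cw_Cons)
  then show ?case
  proof
    assume "Nd c' cs = Nd c bs" then show ?thesis by simp
  next
    assume "Nd c' cs \<in> Cw c bs" then show ?thesis using Cons.IH by simp
  qed
qed

lemma Cw_ST: "S \<in> Cw c bs" "T \<notin> Cw c bs"
  by (induction bs) (auto simp: Cw_Nil Cw_Cons)

lemma par_in_Cw: "par (Nd c bs) \<in> Cw c bs"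
  by (cases bs) (auto simp: Cw_Nil Cw_Cons Cw_ST)

lemma upc_Cw: "c < r \<Longrightarrow> length bs \<le> D \<Longrightarrow> upc (Cw c bs)"
proof (induction bs)
  case Nil then show ?case by (auto simp: upc_def Cw_Nil)
next
  case (Cons b bs)
  then have "upc (Cw c bs)" by simp
  then show ?case using par_in_Cw[of c bs] Cons.prems
    unfolding upc_def Cw_Cons by auto
qed

lemma noleaf_Cw: "length bs \<le> D \<Longrightarrow> noleaf (Cw c bs)"
  unfolding noleaf_def using Cw_len by fastforce

lemma KC_Cw_len: "Nd c' cs \<in> KC (Cw c bs) \<Longrightarrow> length cs \<le> length bs"
proof -
  assume h: "Nd c' cs \<in> KC (Cw c bs)"
  then have p: "par (Nd c' cs) \<in> Cw c bs" unfolding KC_def by auto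
  show ?thesis
  proof (cases cs)
    case (Cons a cs') then show ?thesis using p Cw_len by fastforce
  qed simp
qed

lemma w_in_KC: "c < r \<Longrightarrow> length bs \<le> D \<Longrightarrow> Nd c bs \<in> KC (Cw c bs)"
  unfolding KC_def using par_in_Cw[of c bs] Cw_len[of c bs c bs] by auto

lemma KC_insert:
  assumes "upc C" "Nd c cs \<in> KC C" "length cs < D"
  shows "KC (insert (Nd c cs) C) = (KC C - {Nd c cs}) \<union> {Nd c (True # cs), Nd c (False # cs)}"
    (is "?L = ?R")
proof
  show "?L \<subseteq> ?R"
  proof
    fix v assume v: "v \<in> ?L"
    show "v \<in> ?R"
    proof (cases "par v = Nd c cs")
      case True
      then obtain c' cs' where "v = Nd c' cs'" using v unfolding KC_def by (cases v) auto
      then have v: "v = Nd c' cs'" .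
      show ?thesis
      proof (cases cs')
        case Nil then show ?thesis using True v by simp
      next
        case (Cons a l)
        then have "v = Nd c (a # cs)" using True v by simp
        then show ?thesis by (cases a) auto
      qed
    next
      case False
      then show ?thesis using v unfolding KC_def by auto
    qed
  qed
next
  have cr: "c < r" using assms(2) unfolding KC_def by auto
  have nC: "Nd c cs \<notin> C" using assms(2) unfolding KC_def by auto
  have "Nd c (b # cs) \<notin> C" for b
  proof
    assume "Nd c (b # cs) \<in> C"
    then have "par (Nd c (b # cs)) \<in> C" using assms(1) unfolding upc_def by blast
    then show False using nC by simp
  qed
  then show "?R \<subseteq> ?L" using assms cr unfolding KC_def by auto
qed

lemma KC_S: "KC {S} = (\<lambda>i. Nd i []) ` {..<r}"
proof -
  have "v \<in> KC {S} \<longleftrightarrow> v \<in> (\<lambda>i. Nd i []) ` {..<r}" for v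
  proof (cases v)
    case (Nd c cs) then show ?thesis unfolding KC_def by (cases cs) auto
  qed (auto simp: KC_def)
  then show ?thesis by blast
qed

lemma card_KC_S: "card (KC {S}) = r"
  unfolding KC_S by (subst card_image) (auto simp: inj_on_def)

lemma card_KC_Cw: "c < r \<Longrightarrow> length bs \<le> D \<Longrightarrow> card (KC (Cw c bs)) = r + length bs"
proof (induction bs)
  case Nil then show ?case using card_KC_S by (simp add: Cw_Nil)
next
  case (Cons b bs)
  have u: "upc (Cw c bs)" using upc_Cw Cons.prems by simp
  have w: "Nd c bs \<in> KC (Cw c bs)" using w_in_KC Cons.prems by simp
  have l: "length bs < D" using Cons.prems by simp
  have f: "finite (KC (Cw c bs))" using KC_sub finite_sub by blast
  have n: "Nd c (b' # bs) \<notin> KC (Cw c bs)" for b'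
    using Cw_len[of c bs c bs] unfolding KC_def by auto
  have "card (KC (Cw c (b # bs))) = card ((KC (Cw c bs) - {Nd c bs}) \<union> {Nd c (True # bs), Nd c (False # bs)})"
    unfolding Cw_Cons KC_insert[OF u w l] ..
  also have "\<dots> = card (KC (Cw c bs) - {Nd c bs}) + 2"
    using n f by (subst card_Un_disjoint) auto
  also have "\<dots> = card (KC (Cw c bs)) + 1"
  proof -
    have "card (KC (Cw c bs)) > 0" using f w card_gt_0_iff by blast
    then show ?thesis using card_Diff_singleton[OF w] by simp
  qed
  finally show ?case using Cons by simp
qed

lemma desc_S: "\<not> desc k S" by (cases k) auto

lemma minsep_Cw:
  assumes M: "minimal_separator VV EE {S} {T} K" and w: "Nd c bs \<in> K"
  shows "Cw c bs \<inter> K = {}"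
proof -
  have sep: "separator VV EE {S} {T} K" using M unfolding minimal_separator_def by blast
  note sd = sepD[OF sep]
  let ?R = "\<lambda>v. (S, v) \<in> (rel K)\<^sup>*"
  have RT: "?R v \<Longrightarrow> v \<noteq> T" for v using sd by auto
  have ii: "\<not> desc k v" if "k \<in> K" "?R v" for k v
    using that(2)
  proof (induction rule: rtrancl_induct)
    case base then show ?case using desc_S by simp
  next
    case (step y z)
    show ?case
    proof
      assume dz: "desc k z"
      have z: "z \<notin> K" "(y, z) \<in> EE" using step unfolding rel_def by auto
      then have "z \<noteq> k" using that by auto
      have yT: "y \<noteq> T" "z \<noteq> T" using RT step by (auto intro: rtrancl_into_rtrancl)
      from nbr[OF z(2) yT] show False
      proof
        assume "y = par z \<and> z \<noteq> S"
        then show False using desc_par[OF dz] \<open>z \<noteq> k\<close> step by simp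
      next
        assume "z = par y \<and> y \<noteq> S"
        then show False using desc_parI[of k y] dz step by simp
      qed
    qed
  qed
  have iii: "?R (par (Nd c bs))"
  proof (rule ccontr)
    assume np: "\<not> ?R (par (Nd c bs))"
    have "(S, T) \<notin> (rel (K - {Nd c bs}))\<^sup>*"
    proof -
      have "?R v" if "(S, v) \<in> (rel (K - {Nd c bs}))\<^sup>*" for v
        using that
      proof (induction rule: rtrancl_induct)
        case (step y z)
        have e: "(y, z) \<in> EE" "y \<in> VV" "z \<in> VV" "z \<notin> K - {Nd c bs}" "y \<notin> K - {Nd c bs}"
          using step(2) unfolding rel_def by auto
        show ?case
        proof (cases "z = Nd c bs")
          case True
          have yT: "y \<noteq> T" using RT step by blast
          have zT: "z \<noteq> T" using True by simp
          from nbr[OF e(1) yT zT] show ?thesis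
          proof (elim disjE)
            assume "y = par z \<and> z \<noteq> S" then show ?thesis using np True step(3) by simp
          next
            assume "z = par y \<and> y \<noteq> S"
            then have "desc (Nd c bs) y" using desc_parI[of "Nd c bs" y] True desc_refl[of c bs] by auto
            then show ?thesis using ii[OF w step(3)] by simp
          qed
        next
          case False
          have "y \<notin> K" using step(3) rtr_end[of S y K] sd by auto
          then have "(y, z) \<in> rel K" using e False by (auto simp: rel_def)
          then show ?thesis using step by (meson rtrancl_into_rtrancl)
        qed
      qed simp
      then show ?thesis using RT by blast
    qed
    then have "separator VV EE {S} {T} (K - {Nd c bs})" using sd by (intro sepI) auto
    moreover have "K - {Nd c bs} \<subset> K" using w by blast
    ultimately show False using M unfolding minimal_separator_def by blast
  qed
  show ?thesis
  proof (rule ccontr)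
    assume "Cw c bs \<inter> K \<noteq> {}"
    then obtain m where m: "m < length bs" "Nd c (drop (Suc m) bs) \<in> K"
      using sd unfolding Cw_def by auto
    then obtain b bs' where bs: "bs = b # bs'" by (cases bs) auto
    have d1: "drop (Suc m) bs = drop m bs'" using bs by simp
    have d2: "bs' = take m bs' @ drop m bs'" by simp
    have "desc (Nd c (drop (Suc m) bs)) (Nd c bs')"
      unfolding desc.simps d1 using d2 by blast
    then show False using ii[OF m(2) iii] bs by simp
  qed
qed

end


context tr begin

lemma sep_ge: "separator VV EE {S} {T} K \<Longrightarrow> r \<le> card K"
  using lowbound[of "{S}" K] card_KC_S sepD[of K] by (auto simp: upc_def)

lemma imp_roots: "important_separator VV EE {S} {T} (KC {S})"
  using D1 by (intro importantKC) (auto simp: upc_def noleaf_def KC_S)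

lemma sep_roots: "separator VV EE {S} {T} (KC {S})"
  using imp_roots unfolding important_separator_def minimal_separator_def by blast

lemma mis: "min_important_size VV EE {S} {T} = r"
  unfolding min_important_size_def
proof (rule Least_equality)
  show "\<exists>K. important_separator VV EE {S} {T} K \<and> card K = r" using imp_roots card_KC_S by blast
next
  fix n assume "\<exists>K. important_separator VV EE {S} {T} K \<and> card K = n"
  then show "r \<le> n" using sep_ge unfolding important_separator_def minimal_separator_def by blast
qed

lemma union_eq:
  assumes Dx: "D = Suc x"
  shows "\<Union>{K. important_separator VV EE {S} {T} K \<and> excess VV EE {S} {T} K \<le> x}
     = (\<lambda>(c, cs). Nd c cs) ` ({..<r} \<times> {cs. set cs \<subseteq> UNIV \<and> length cs \<le> x})" (is "?U = ?M")
proof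
  show "?U \<subseteq> ?M"
  proof
    fix v assume "v \<in> ?U"
    then obtain K where K: "important_separator VV EE {S} {T} K" "card K - r \<le> x" "v \<in> K"
      unfolding excess_def mis by blast
    have ms: "minimal_separator VV EE {S} {T} K" using K unfolding important_separator_def by blast
    then have sp: "separator VV EE {S} {T} K" unfolding minimal_separator_def by blast
    then have "v \<in> VV - {S, T}" using sepD K by blast
    then obtain c bs where v: "v = Nd c bs" "c < r" "length bs \<le> D" by (cases v) auto
    have "card (KC (Cw c bs)) \<le> card K"
      using lowbound[OF upc_Cw[OF v(2,3)] sp minsep_Cw[OF ms]] K v by simp
    then have "length bs \<le> x" using card_KC_Cw[OF v(2,3)] K by simp
    then show "v \<in> ?M" using v by auto
  qed
next
  show "?M \<subseteq> ?U"
  proof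
    fix v assume "v \<in> ?M"
    then obtain c bs where v: "v = Nd c bs" "c < r" "length bs \<le> x" by auto
    have l: "length bs \<le> D" using v Dx by simp
    have imp: "important_separator VV EE {S} {T} (KC (Cw c bs))"
      by (rule importantKC[OF upc_Cw[OF v(2) l] noleaf_Cw[OF l]])
         (use KC_Cw_len v Dx in fastforce)
    have "excess VV EE {S} {T} (KC (Cw c bs)) \<le> x"
      unfolding excess_def mis card_KC_Cw[OF v(2) l] using v by simp
    then show "v \<in> ?U" using imp w_in_KC[OF v(2) l] v by blast
  qed
qed

lemma sum2: "(\<Sum>i\<le>x. (2::nat) ^ i) = 2 ^ (x + 1) - 1"
  by (induction x) auto

lemma card_M: "card ((\<lambda>(c, cs). Nd c cs) ` ({..<r} \<times> {cs. set cs \<subseteq> (UNIV :: bool set) \<and> length cs \<le> x}))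
   = 2 ^ (x + 1) * r - r"
proof -
  have i: "inj_on (\<lambda>(c, cs). Nd c cs) ({..<r} \<times> {cs. set cs \<subseteq> (UNIV :: bool set) \<and> length cs \<le> x})"
    by (auto simp: inj_on_def)
  have "card ((\<lambda>(c, cs). Nd c cs) ` ({..<r} \<times> {cs. set cs \<subseteq> (UNIV :: bool set) \<and> length cs \<le> x}))
     = card ({..<r} \<times> {cs. set cs \<subseteq> (UNIV :: bool set) \<and> length cs \<le> x})"
    by (rule card_image[OF i])
  also have "\<dots> = r * card {cs. set cs \<subseteq> (UNIV :: bool set) \<and> length cs \<le> x}"
    by (simp only: card_cartesian_product card_lessThan)
  also have "card {cs. set cs \<subseteq> (UNIV :: bool set) \<and> length cs \<le> x} = (\<Sum>i\<le>x. 2 ^ i)"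
    using card_lists_length_le[of "UNIV :: bool set" x] by simp
  also have "r * (\<Sum>i\<le>x. (2::nat) ^ i) = 2 ^ (x + 1) * r - r" unfolding sum2 by (simp add: diff_mult_distrib2 mult.commute)
  finally show ?thesis .
qed

lemma main:
  assumes Dx: "D = Suc x"
  shows "ugraph VV EE \<and> S \<in> VV \<and> T \<in> VV \<and> S \<noteq> T \<and>
     (\<exists>K. separator VV EE {S} {T} K \<and> card K = r) \<and>
     (\<forall>K. separator VV EE {S} {T} K \<longrightarrow> card K \<ge> r) \<and>
     card (\<Union>{K. important_separator VV EE {S} {T} K \<and> excess VV EE {S} {T} K \<le> x})
       = 2 ^ (x + 1) * r - r"
  using ugraph_VV sep_roots card_KC_S sep_ge union_eq[OF Dx] card_M by auto

end

instance vt :: countable by countable_datatype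

theorem theorem4:
  fixes x r :: nat
  assumes "r \<ge> 1"
  shows "\<exists>(V :: nat set) E s t. ugraph V E \<and> s \<in> V \<and> t \<in> V \<and> s \<noteq> t \<and>
     (\<exists>K. separator V E {s} {t} K \<and> card K = r) \<and>
     (\<forall>K. separator V E {s} {t} K \<longrightarrow> card K \<ge> r) \<and>
     card (\<Union>{S. important_separator V E {s} {t} S \<and> excess V E {s} {t} S \<le> x})
       = 2 ^ (x + 1) * r - r"
proof -
  interpret tr r "Suc x" using assms by unfold_locales auto
  note m = main[OF refl]
  let ?f = "to_nat :: vt \<Rightarrow> nat"
  have inj: "inj ?f" by simp
  have c: "card (?f ` A) = card A" for A by (simp add: card_image inj_on_subset)
  have sS: "{?f S} = ?f ` {S}" "{?f T} = ?f ` {T}" by auto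
  show ?thesis
  proof (rule exI[of _ "?f ` VV"], rule exI[of _ "map_prod ?f ?f ` EE"], rule exI[of _ "?f S"], rule exI[of _ "?f T"], intro conjI)
    show "ugraph (?f ` VV) (map_prod ?f ?f ` EE)" using ugraph_map[OF inj] m by blast
    show "?f S \<in> ?f ` VV" "?f T \<in> ?f ` VV" by auto
    show "?f S \<noteq> ?f T" by simp
    obtain K where K: "separator VV EE {S} {T} K" "card K = r" using m by blast
    have "separator (?f ` VV) (map_prod ?f ?f ` EE) (?f ` {S}) (?f ` {T}) (?f ` K)"
      using K(1) by (simp only: sep_map[OF inj])
    then show "\<exists>K. separator (?f ` VV) (map_prod ?f ?f ` EE) {?f S} {?f T} K \<and> card K = r"
      using K(2) c[of K] unfolding sS by blast
    show "\<forall>K. separator (?f ` VV) (map_prod ?f ?f ` EE) {?f S} {?f T} K \<longrightarrow> card K \<ge> r"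
    proof (intro allI impI)
      fix K assume h: "separator (?f ` VV) (map_prod ?f ?f ` EE) {?f S} {?f T} K"
      obtain K0 where e: "K = ?f ` K0" using sep_range[OF h] by blast
      have "separator (?f ` VV) (map_prod ?f ?f ` EE) (?f ` {S}) (?f ` {T}) (?f ` K0)"
        using h unfolding e sS .
      then have "separator VV EE {S} {T} K0" by (simp only: sep_map[OF inj])
      then have "r \<le> card K0" using m by blast
      also have "card K0 = card K" using c[of K0] e by simp
      finally show "card K \<ge> r" .
    qed
    show "card (\<Union>{S'. important_separator (?f ` VV) (map_prod ?f ?f ` EE) {?f S} {?f T} S' \<and>
         excess (?f ` VV) (map_prod ?f ?f ` EE) {?f S} {?f T} S' \<le> x}) = 2 ^ (x + 1) * r - r"
      unfolding sS union_map[OF inj] c using m by simp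
  qed
qed

end
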